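(* There exists a constant $c_{m,3}>0$ depending only on $m$ such that the following holds. Let $r>0$ and \[0<\delta<\min\left\{\frac12\left(m-\frac12\right),\ \frac{F_m(r)-F_m(0)}{4}\right\}.\] Then for every $t\in\mathbb R$ with $|t|>r$ and every $n\ge1$, \[P\big(L_n(t)\le F_m(0)+\delta\big)\le\exp\left(-\frac{\delta}{c_{m,3}}\big(F_m(t)-F_m(0)-2\delta\big)n\right).\]
   Context: Fix $m>1/2$. Let $c_m:=\left(\int_{\mathbb R}(1+x^2)^{-m}dx\right)^{-1}$ and $\nu_m(dx):=c_m(1+x^2)^{-m}dx$. Let $(X_n)_{n\ge1}$ be i.i.d. random variables on $(\Omega,\mathcal F,P)$ with law $\nu_m$. Let $L_n(t):=\frac1n\sum_{i=1}^n\log(1+(X_i-t)^2)$ and $F_m(t):=\int_{\mathbb R}\log(1+(x-t)^2)\,\nu_m(dx)$ for $t\in\mathbb R$. *)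

theory Defs
  imports "HOL-Probability.Probability"
begin

definition cm :: "real \<Rightarrow> real" where
  "cm m = 1 / (LINT x|lborel. (1 + x\<^sup>2) powr (-m))"

definition num :: "real \<Rightarrow> real measure" where
  "num m = density lborel (\<lambda>x. ennreal (cm m * (1 + x\<^sup>2) powr (-m)))"

definition Fm :: "real \<Rightarrow> real \<Rightarrow> real" where
  "Fm m t = (LINT x|num m. ln (1 + (x - t)\<^sup>2))"

definition Ln :: "(nat \<Rightarrow> 'a \<Rightarrow> real) \<Rightarrow> nat \<Rightarrow> real \<Rightarrow> 'a \<Rightarrow> real" where
  "Ln X n t \<omega> = (1 / real n) * (\<Sum>i\<in>{1..n}. ln (1 + (X i \<omega> - t)\<^sup>2))"

end

theory Submission
  imports Defs
begin


lemma aux1: fixes y q :: real assumes "y \<ge> 1" "q > 0" shows "(1 + y\<^sup>2) powr (-q) \<le> y powr (-2*q)"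
proof -
  have "(1 + y\<^sup>2) powr (-q) \<le> (y\<^sup>2) powr (-q)"
    using assms by (intro powr_mono2') auto
  also have "(y\<^sup>2) powr (-q) = y powr (-2*q)"
    using assms by (simp add: powr_powr flip: powr_numeral)
  finally show ?thesis .
qed

lemma int_lborel_pow:
  fixes q :: real assumes q: "q > 1/2"
  shows "integrable lborel (\<lambda>x::real. (1 + x\<^sup>2) powr (-q))"
proof -
  define g2 where "g2 x = indicator {1..} x * x powr (-2*q)" for x :: real
  have g2m[measurable]: "g2 \<in> borel_measurable borel" unfolding g2_def by measurable
  have hi: "((\<lambda>x::real. x powr (-2*q)) has_integral -(1 powr (-2*q+1)) / (-2*q+1)) {1..}"
    by (rule has_integral_powr_to_inf) (use q in auto)
  have "integral\<^sup>N lborel (\<lambda>x. ennreal (x powr (-2*q)) * indicator {1..} x) = ennreal (-(1 powr (-2*q+1)) / (-2*q+1))"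
    by (rule nn_integral_has_integral_lebesgue'[OF _ hi]) auto
  moreover have "integral\<^sup>N lborel (\<lambda>x. ennreal (g2 x)) = integral\<^sup>N lborel (\<lambda>x. ennreal (x powr (-2*q)) * indicator {1..} x)"
    by (intro nn_integral_cong) (auto simp: g2_def indicator_def)
  ultimately have "integral\<^sup>N lborel (\<lambda>x. ennreal (g2 x)) < \<infinity>" by simp
  then have i2: "integrable lborel g2"
    by (intro integrableI_nonneg) (auto simp: g2_def indicator_def)
  have i3: "integrable lborel (\<lambda>x. g2 (- x))"
    using i2 integrable_distr_eq[of uminus lborel borel g2] lborel_distr_uminus by simp
  have i1: "integrable lborel (indicator {-1..1::real} :: real \<Rightarrow> real)"
    by (intro integrable_real_indicator) auto
  have iS: "integrable lborel (\<lambda>x. indicator {-1..1::real} x + g2 x + g2 (-x))"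
    using i1 i2 i3 by auto
  show ?thesis
  proof (rule Bochner_Integration.integrable_bound[OF iS])
    show "(\<lambda>x::real. (1 + x\<^sup>2) powr (-q)) \<in> borel_measurable lborel" by measurable
    show "AE x in lborel. norm ((1 + x\<^sup>2) powr (-q)) \<le> norm (indicator {-1..1::real} x + g2 x + g2 (-x))"
    proof (intro AE_I2)
      fix x :: real
      have nn: "0 \<le> g2 x" "0 \<le> g2 (-x)" by (auto simp: g2_def indicator_def)
      have "(1 + x\<^sup>2) powr (-q) \<le> indicator {-1..1::real} x + g2 x + g2 (-x)"
      proof (cases "\<bar>x\<bar> \<le> 1")
        case True
        have "(1 + x\<^sup>2) powr (-q) \<le> 1"
          using powr_mono2'[of "-q" 1 "1+x\<^sup>2"] q by simp
        then show ?thesis using True nn by (auto simp: indicator_def abs_le_iff)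
      next
        case False
        show ?thesis
        proof (cases "x \<ge> 1")
          case True
          then show ?thesis using aux1[of x q] q nn False by (simp add: g2_def indicator_def)
        next
          case F2: False
          then have "-x \<ge> 1" using False by auto
          then show ?thesis using aux1[of "-x" q] q nn False by (simp add: g2_def indicator_def)
        qed
      qed
      then show "norm ((1 + x\<^sup>2) powr (-q)) \<le> norm (indicator {-1..1::real} x + g2 x + g2 (-x))"
        using nn by (simp add: indicator_def)
    qed
  qed
qed



lemma cm_nonneg: "cm m \<ge> 0"
  unfolding cm_def by (simp add: integral_nonneg)

lemma int_num_pow:
  fixes m e :: real assumes "m > 1/2" "e < m - 1/2"
  shows "integrable (num m) (\<lambda>x. (1 + x\<^sup>2) powr e)"
  unfolding num_def
proof (subst integrable_density)
  show "(\<lambda>x::real. cm m * (1 + x\<^sup>2) powr - m) \<in> borel_measurable lborel" by measurable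
  show "AE x in lborel. 0 \<le> cm m * (1 + x\<^sup>2) powr - m" using cm_nonneg by auto
  have I: "integrable lborel (\<lambda>x::real. cm m * (1 + x\<^sup>2) powr (-(m-e)))"
    using int_lborel_pow[of "m-e"] assms by auto
  moreover have E: "\<And>x::real. cm m * (1 + x\<^sup>2) powr (-(m-e)) = (cm m * (1 + x\<^sup>2) powr - m) *\<^sub>R (1 + x\<^sup>2) powr e"
  proof -
    fix x :: real
    have "(1 + x\<^sup>2) powr - m * (1 + x\<^sup>2) powr e = (1 + x\<^sup>2) powr (-(m-e))"
      by (simp add: powr_add[symmetric])
    then show "cm m * (1 + x\<^sup>2) powr (-(m-e)) = (cm m * (1 + x\<^sup>2) powr - m) *\<^sub>R (1 + x\<^sup>2) powr e"
      by (simp add: mult.assoc)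
  qed
  have eqf: "(\<lambda>x. (cm m * (1 + x\<^sup>2) powr - m) *\<^sub>R (1 + x\<^sup>2) powr e) = (\<lambda>x::real. cm m * (1 + x\<^sup>2) powr (-(m-e)))"
    by (rule ext, rule E[symmetric])
  show "integrable lborel (\<lambda>x. (cm m * (1 + x\<^sup>2) powr - m) *\<^sub>R (1 + x\<^sup>2) powr e)"
    unfolding eqf by (rule I)
qed simp

lemma int_num_bound:
  fixes m e a b :: real assumes "prob_space (num m)" "m > 1/2" "e < m - 1/2"
    and f[measurable]: "f \<in> borel_measurable borel" and b: "\<And>x. \<bar>f x\<bar> \<le> a + b * (1 + x\<^sup>2) powr e"
  shows "integrable (num m) f"
proof -
  interpret prob_space "num m" by fact
  have sb: "sets (num m) = sets borel" by (simp add: num_def)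
  have "integrable (num m) (\<lambda>x. a + b * (1 + x\<^sup>2) powr e)"
    using int_num_pow[OF assms(2,3)] by auto
  then show ?thesis
  proof (rule Bochner_Integration.integrable_bound)
    show "f \<in> borel_measurable (num m)" unfolding num_def by simp
    show "AE x in num m. norm (f x) \<le> norm (a + b * (1 + x\<^sup>2) powr e)"
      using b by (intro AE_I2) (auto intro: order_trans[OF _ abs_ge_self])
  qed
qed

lemma ln_le_powr: fixes y \<epsilon> :: real assumes "y > 0" "\<epsilon> > 0" shows "ln y \<le> y powr \<epsilon> / \<epsilon>"
proof -
  have "ln (y powr \<epsilon>) \<le> y powr \<epsilon> - 1" using assms by (intro ln_le_minus_one) auto
  then have "\<epsilon> * ln y \<le> y powr \<epsilon>" using assms by (simp add: ln_powr)
  then show ?thesis using assms by (simp add: field_simps)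
qed



lemma chernoff:
  fixes M :: "'a measure" and X :: "nat \<Rightarrow> 'a \<Rightarrow> real" and \<mu> :: "real measure" and l t a :: real
  assumes P: "prob_space M" and Xm: "\<forall>i\<ge>1. X i \<in> borel_measurable M"
   and ind: "prob_space.indep_vars M (\<lambda>_. borel) X {1..}" and dist: "\<forall>i\<ge>1. distr M borel (X i) = \<mu>"
   and l: "l > 0" and n: "n \<ge> 1"
  shows "measure M {\<omega>\<in>space M. Ln X n t \<omega> \<le> a} \<le> (exp (l*a) * (\<integral>x. (1+(x-t)\<^sup>2) powr (-l) \<partial>\<mu>))^n"
proof -
  interpret prob_space M by fact
  define f where "f x = (1+(x-t)\<^sup>2) powr (-l)" for x
  define W where "W \<omega> = (\<Prod>i\<in>{1..n}. f (X i \<omega>))" for \<omega>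
  define G where "G = (\<integral>x. f x \<partial>\<mu>)"
  have fm[measurable]: "f \<in> borel_measurable borel" unfolding f_def by measurable
  have f01: "0 \<le> f x" "f x \<le> 1" for x
    unfolding f_def using powr_mono2'[of "-l" 1 "1+(x-t)\<^sup>2"] l by auto
  have Xm': "X i \<in> borel_measurable M" if "i \<in> {1..n}" for i using Xm that by auto
  have Wm: "W \<in> borel_measurable M"
    unfolding W_def by (intro borel_measurable_prod) (use Xm' in measurable)
  have indn: "indep_vars (\<lambda>_. borel) (\<lambda>i \<omega>. f (X i \<omega>)) {1..n}"
    by (rule indep_vars_compose2[OF indep_vars_subset[OF ind]]) auto
  have intf: "integrable M (\<lambda>\<omega>. f (X i \<omega>))" if "i \<in> {1..n}" for i
  proof (rule Bochner_Integration.integrable_bound[OF integrable_const[of 1]])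
    show "(\<lambda>\<omega>. f (X i \<omega>)) \<in> borel_measurable M" using Xm'[OF that] by measurable
    show "AE x in M. norm (f (X i x)) \<le> norm (1::real)" using f01 by auto
  qed
  have Wint: "integrable M W"
    unfolding W_def by (rule indep_vars_integrable[OF _ indn intf]) auto
  have "(\<integral>\<omega>. W \<omega> \<partial>M) = (\<Prod>i\<in>{1..n}. \<integral>\<omega>. f (X i \<omega>) \<partial>M)"
    unfolding W_def by (rule indep_vars_lebesgue_integral[OF _ indn intf]) auto
  also have "\<dots> = (\<Prod>i\<in>{1..n}. G)"
  proof (rule prod.cong[OF refl])
    fix i assume i: "i \<in> {1..n}"
    have "(\<integral>\<omega>. f (X i \<omega>) \<partial>M) = (\<integral>x. f x \<partial>distr M borel (X i))"
      by (rule integral_distr[symmetric]) (use Xm'[OF i] in auto)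
    then show "(\<integral>\<omega>. f (X i \<omega>) \<partial>M) = G" using dist i unfolding G_def by auto
  qed
  also have "\<dots> = G ^ n" by simp
  finally have EW: "(\<integral>\<omega>. W \<omega> \<partial>M) = G ^ n" .
  have Lm: "(\<lambda>\<omega>. Ln X n t \<omega>) \<in> borel_measurable M"
    unfolding Ln_def by (intro borel_measurable_times borel_measurable_sum borel_measurable_const) (use Xm' in measurable)
  have sub: "{\<omega>\<in>space M. Ln X n t \<omega> \<le> a} \<subseteq> {\<omega>\<in>space M. W \<omega> \<ge> exp (-(l*n*a))}"
  proof safe
    fix \<omega> assume "\<omega> \<in> space M" and le: "Ln X n t \<omega> \<le> a"
    have nz: "1 + y\<^sup>2 \<noteq> 0" for y :: real by (smt (verit) zero_le_power2)
    define S where "S = (\<Sum>i\<in>{1..n}. ln (1 + (X i \<omega> - t)\<^sup>2))"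
    have "S / n \<le> a" using le unfolding Ln_def S_def by simp
    then have S: "S \<le> n * a" using n by (simp add: field_simps)
    have "W \<omega> = (\<Prod>i\<in>{1..n}. exp (- l * ln (1 + (X i \<omega> - t)\<^sup>2)))"
      unfolding W_def f_def by (intro prod.cong refl) (simp add: powr_def nz)
    also have "\<dots> = exp (\<Sum>i\<in>{1..n}. - l * ln (1 + (X i \<omega> - t)\<^sup>2))"
      by (simp add: exp_sum)
    also have "\<dots> = exp (- l * S)" unfolding S_def by (simp add: sum_distrib_left)
    finally have "W \<omega> = exp (- l * S)" .
    moreover have "- (l * n * a) \<le> - l * S" using S l by (simp add: mult_left_mono)
    ultimately show "exp (-(l*n*a)) \<le> W \<omega>" by simp
  qed
  have "measure M {\<omega>\<in>space M. Ln X n t \<omega> \<le> a} \<le> measure M {\<omega>\<in>space M. W \<omega> \<ge> exp (-(l*n*a))}"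
    by (rule finite_measure_mono[OF sub]) (use Wm in measurable)
  also have "\<dots> \<le> (\<integral>\<omega>. W \<omega> \<partial>M) / exp (-(l*n*a))"
    by (rule integral_Markov_inequality_measure[OF Wint, of "space M"])
       (auto simp: W_def f01 prod_nonneg)
  also have "\<dots> = G^n * exp (l*a) ^ n"
    by (simp add: EW exp_minus field_simps flip: exp_of_nat_mult)
  also have "\<dots> = (exp (l*a) * G)^n" by (simp add: power_mult_distrib)
  finally show ?thesis unfolding G_def f_def .
qed



lemma P1: fixes x t :: real shows "1 + t\<^sup>2 \<le> 2 * (1 + x\<^sup>2) * (1 + (x - t)\<^sup>2)"
proof -
  have "0 \<le> (2*x - t)\<^sup>2" "0 \<le> x\<^sup>2 * (x - t)\<^sup>2" by auto
  then show ?thesis by (simp add: power2_eq_square algebra_simps)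
qed

lemma P2: fixes x t :: real shows "1 + (x - t)\<^sup>2 \<le> 2 * (1 + x\<^sup>2) * (1 + t\<^sup>2)"
proof -
  have "0 \<le> (x + t)\<^sup>2" "0 \<le> x\<^sup>2 * t\<^sup>2" by auto
  then show ?thesis by (simp add: power2_eq_square algebra_simps)
qed

lemma lnP1: fixes x t :: real shows "ln (1 + t\<^sup>2) \<le> ln 2 + ln (1 + x\<^sup>2) + ln (1 + (x - t)\<^sup>2)"
proof -
  have "ln (1 + t\<^sup>2) \<le> ln (2 * (1 + x\<^sup>2) * (1 + (x - t)\<^sup>2))"
    using P1[of t x] by (intro ln_mono) (auto intro: add_pos_nonneg)
  also have "\<dots> = ln 2 + ln (1 + x\<^sup>2) + ln (1 + (x - t)\<^sup>2)"
  proof -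
    have p: "0 < 1 + y\<^sup>2" for y :: real by (smt (verit) zero_le_power2)
    have "ln (2 * (1 + x\<^sup>2) * (1 + (x - t)\<^sup>2)) = ln (2 * (1 + x\<^sup>2)) + ln (1 + (x - t)\<^sup>2)"
      using p[of x] p[of "x - t"] by (intro ln_mult_pos) auto
    also have "ln (2 * (1 + x\<^sup>2)) = ln 2 + ln (1 + x\<^sup>2)"
      using p[of x] by (intro ln_mult_pos) auto
    finally show ?thesis .
  qed
  finally show ?thesis .
qed

lemma lnP2: fixes x t :: real shows "ln (1 + (x - t)\<^sup>2) \<le> ln 2 + ln (1 + x\<^sup>2) + ln (1 + t\<^sup>2)"
proof -
  have "ln (1 + (x - t)\<^sup>2) \<le> ln (2 * (1 + x\<^sup>2) * (1 + t\<^sup>2))"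
    using P2[of x t] by (intro ln_mono) (auto intro: add_pos_nonneg)
  also have "\<dots> = ln 2 + ln (1 + x\<^sup>2) + ln (1 + t\<^sup>2)"
  proof -
    have p: "0 < 1 + y\<^sup>2" for y :: real by (smt (verit) zero_le_power2)
    have "ln (2 * (1 + x\<^sup>2) * (1 + t\<^sup>2)) = ln (2 * (1 + x\<^sup>2)) + ln (1 + t\<^sup>2)"
      using p[of x] p[of "t"] by (intro ln_mult_pos) auto
    also have "ln (2 * (1 + x\<^sup>2)) = ln 2 + ln (1 + x\<^sup>2)"
      using p[of x] by (intro ln_mult_pos) auto
    finally show ?thesis .
  qed
  finally show ?thesis .
qed

lemma exp_quad: fixes u :: real assumes "u \<ge> 0" shows "exp (-u) \<le> 1 - u + u\<^sup>2/2"
proof -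
  define h where "h v = 1 - v + v\<^sup>2/2 - exp (-v)" for v :: real
  have d: "(h has_real_derivative (-1 + v + exp (-v))) (at v)" for v
    unfolding h_def by (auto intro!: derivative_eq_intros simp: power2_eq_square)
  have "h 0 \<le> h u"
  proof (rule DERIV_nonneg_imp_nondecreasing[OF assms])
    fix v :: real assume "0 \<le> v" "v \<le> u"
    have "0 \<le> -1 + v + exp (-v)" using exp_ge_add_one_self[of "-v"] by simp
    then show "\<exists>y. (h has_real_derivative y) (at v) \<and> 0 \<le> y" using d by blast
  qed
  then show ?thesis by (simp add: h_def)
qed

lemma young1: fixes y p :: real assumes "y > 0" "0 \<le> p" "p \<le> 1"
  shows "y powr p \<le> 1 + p * (y - 1)"
  using Youngs_inequality_0[of p "1-p" y 1] assms by (simp add: algebra_simps)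



lemma int_lin:
  fixes g h :: "'a \<Rightarrow> real" and a b c :: real
  assumes "prob_space N" "integrable N g" "integrable N h"
  shows "(\<integral>x. a + b * g x + c * h x \<partial>N) = a + b * (\<integral>x. g x \<partial>N) + c * (\<integral>x. h x \<partial>N)"
proof -
  interpret prob_space N by fact
  have i1: "integrable N (\<lambda>x. b * g x)" "integrable N (\<lambda>x. c * h x)" using assms(2,3) by auto
  have "(\<integral>x. a + b * g x + c * h x \<partial>N) = (\<integral>x. a + b * g x \<partial>N) + (\<integral>x. c * h x \<partial>N)"
    using i1 by (intro Bochner_Integration.integral_add) auto
  also have "(\<integral>x. a + b * g x \<partial>N) = (\<integral>x. a \<partial>N) + (\<integral>x. b * g x \<partial>N)"
    using i1 by (intro Bochner_Integration.integral_add) auto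
  finally show ?thesis by (simp add: prob_space)
qed

lemma int_ln:
  fixes m t :: real assumes "prob_space (num m)" "m > 1/2"
  shows "integrable (num m) (\<lambda>x. ln (1 + (x - t)\<^sup>2))"
proof -
  define d0 where "d0 = (m - 1/2)/2"
  have d0: "d0 > 0" "d0 < m - 1/2" using assms by (auto simp: d0_def)
  show ?thesis
  proof (rule int_num_bound[OF assms d0(2), of _ "ln 2 + ln (1 + t\<^sup>2)" "1/d0"])
    show "(\<lambda>x. ln (1 + (x - t)\<^sup>2)) \<in> borel_measurable borel" by measurable
    fix x :: real
    have p: "0 < 1 + y\<^sup>2" for y :: real by (smt (verit) zero_le_power2)
    have "0 \<le> ln (1 + (x - t)\<^sup>2)" by simp
    moreover have "ln (1 + x\<^sup>2) \<le> (1 + x\<^sup>2) powr d0 / d0" by (rule ln_le_powr[OF p d0(1)])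
    ultimately show "\<bar>ln (1 + (x - t)\<^sup>2)\<bar> \<le> ln 2 + ln (1 + t\<^sup>2) + 1 / d0 * (1 + x\<^sup>2) powr d0"
      using lnP2[of x t] by simp
  qed
qed



theorem lemma5p2:
  fixes m :: real
  assumes "m > 1/2"
  shows "\<exists>c>0. \<forall>(M :: 'a measure) (X :: nat \<Rightarrow> 'a \<Rightarrow> real) (r::real) (\<delta>::real) (t::real) (n::nat).
           prob_space M
           \<and> (\<forall>i\<ge>1. X i \<in> borel_measurable M)
           \<and> prob_space.indep_vars M (\<lambda>_. borel) X {1..}
           \<and> (\<forall>i\<ge>1. distr M borel (X i) = num m)
           \<and> r > 0
           \<and> 0 < \<delta> \<and> \<delta> < min ((1/2) * (m - 1/2)) ((Fm m r - Fm m 0) / 4)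
           \<and> \<bar>t\<bar> > r \<and> n \<ge> 1
         \<longrightarrow> measure M {\<omega> \<in> space M. Ln X n t \<omega> \<le> Fm m 0 + \<delta>}
               \<le> exp (- (\<delta> / c) * (Fm m t - Fm m 0 - 2 * \<delta>) * real n)"
proof -
  define d0 where "d0 = (m - 1/2)/2"
  define \<mu> where "\<mu> = num m"
  define F0 where "F0 = Fm m 0"
  define EZ where "EZ = (\<integral>x. (1 + x\<^sup>2) powr d0 \<partial>\<mu>)"
  define K0 where "K0 = (EZ - 1) / d0"
  define D0 where "D0 = 2 * (2 * F0 + 2 * ln 2 + \<bar>K0\<bar>)"
  define Ab where "Ab = 2 * ln 2 + 2 * F0 + D0 + 2 * d0"
  define B2 where "B2 = 2 * Ab\<^sup>2 + 8 * EZ / d0\<^sup>2"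
  define s where "s = min 1 (2 / B2)"
  have d0: "d0 > 0" "d0 < m - 1/2" using assms by (auto simp: d0_def)
  have F0nn: "F0 \<ge> 0" unfolding F0_def Fm_def by (intro Bochner_Integration.integral_nonneg) auto
  have EZnn: "EZ \<ge> 0" unfolding EZ_def by (intro Bochner_Integration.integral_nonneg) auto
  have ln2: "ln (2::real) > 0" by simp
  have D0nn: "D0 \<ge> 0" unfolding D0_def using F0nn ln2 by auto
  have Abpos: "Ab > 0" unfolding Ab_def using F0nn ln2 D0nn d0 by linarith
  have B2pos: "B2 > 0" unfolding B2_def using Abpos EZnn d0 by (intro add_pos_nonneg) auto
  have spos: "s > 0" and s1: "s \<le> 1" and sB2: "s * B2 \<le> 2"
    unfolding s_def using B2pos by (auto simp: min_def field_simps)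
  show ?thesis
  proof (intro exI[of _ "2 / s"] conjI allI impI)
    show "2 / s > 0" using spos by simp
    fix M :: "'a measure" and X :: "nat \<Rightarrow> 'a \<Rightarrow> real" and r \<delta> t :: real and n :: nat
    assume H: "prob_space M
           \<and> (\<forall>i\<ge>1. X i \<in> borel_measurable M)
           \<and> prob_space.indep_vars M (\<lambda>_. borel) X {1..}
           \<and> (\<forall>i\<ge>1. distr M borel (X i) = num m)
           \<and> r > 0
           \<and> 0 < \<delta> \<and> \<delta> < min ((1/2) * (m - 1/2)) ((Fm m r - Fm m 0) / 4)
           \<and> \<bar>t\<bar> > r \<and> n \<ge> 1"
    then have P: "prob_space M" and Xm: "\<forall>i\<ge>1. X i \<in> borel_measurable M"
      and ind: "prob_space.indep_vars M (\<lambda>_. borel) X {1..}"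
      and dist: "\<forall>i\<ge>1. distr M borel (X i) = \<mu>"
      and \<delta>: "0 < \<delta>" "\<delta> < d0" and n: "n \<ge> 1"
      by (auto simp: \<mu>_def d0_def)
    interpret M: prob_space M by fact
    have P\<mu>: "prob_space \<mu>"
      using M.prob_space_distr[of "X 1" borel] Xm dist by auto
    interpret N: prob_space \<mu> by fact
    define Ft where "Ft = Fm m t"
    define D where "D = Ft - F0 - 2 * \<delta>"
    define l where "l = s * \<delta>"
    have l: "0 < l" "l \<le> \<delta>" using spos s1 \<delta> by (auto simp: l_def mult_le_cancel_right1)
    have eqc: "- (\<delta> / (2 / s)) * (Fm m t - Fm m 0 - 2 * \<delta>) * real n = - (l * D / 2) * real n"
      by (simp add: l_def D_def Ft_def F0_def)
    have main: "measure M {\<omega> \<in> space M. Ln X n t \<omega> \<le> Fm m 0 + \<delta>}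
               \<le> exp (- (l * D / 2) * real n)"
    proof (cases "D \<le> 0")
      case True
      have "measure M {\<omega> \<in> space M. Ln X n t \<omega> \<le> Fm m 0 + \<delta>} \<le> 1" by (rule M.prob_le_1)
      also have "1 \<le> exp (- (l * D / 2) * real n)"
        using True l by (intro one_le_exp_iff[THEN iffD2]) (auto intro!: mult_nonneg_nonneg simp: mult_nonpos_nonneg mult_le_0_iff)
      finally show ?thesis .
    next
      case False
      then have Dpos: "D > 0" by simp
      have nz: "1 + y\<^sup>2 \<noteq> 0" for y :: real by (smt (verit) zero_le_power2)
      have pz: "0 < 1 + y\<^sup>2" for y :: real by (smt (verit) zero_le_power2)
      define f where "f x = (1 + (x - t)\<^sup>2) powr (-l)" for x :: real
      define G where "G = (\<integral>x. f x \<partial>\<mu>)"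
      have fm: "f \<in> borel_measurable borel" unfolding f_def by measurable
      have fexp: "f x = exp (- l * ln (1 + (x - t)\<^sup>2))" for x
        unfolding f_def by (simp add: powr_def nz)
      have f01: "0 \<le> f x" "f x \<le> 1" for x
        unfolding f_def using powr_mono2'[of "-l" 1 "1+(x-t)\<^sup>2"] l by auto
      have ch: "measure M {\<omega> \<in> space M. Ln X n t \<omega> \<le> Fm m 0 + \<delta>} \<le> (exp (l * (F0 + \<delta>)) * G) ^ n"
        using chernoff[OF P Xm ind dist l(1) n, of t "F0 + \<delta>"] unfolding G_def f_def F0_def by simp
      have Gnn: "G \<ge> 0" unfolding G_def using f01 by (intro Bochner_Integration.integral_nonneg) auto
      have iZ: "integrable \<mu> (\<lambda>x. (1 + x\<^sup>2) powr d0)" unfolding \<mu>_def by (rule int_num_pow[OF assms d0(2)])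
      have iYt: "integrable \<mu> (\<lambda>x. ln (1 + (x - t)\<^sup>2))" unfolding \<mu>_def by (rule int_ln[OF P\<mu>[unfolded \<mu>_def] assms])
      have iY0: "integrable \<mu> (\<lambda>x. ln (1 + (x - 0)\<^sup>2))" unfolding \<mu>_def by (rule int_ln[OF P\<mu>[unfolded \<mu>_def] assms])
      have iF: "integrable \<mu> f" unfolding \<mu>_def
        by (rule int_num_bound[OF P\<mu>[unfolded \<mu>_def] assms, of 0 f 1 0]) (use d0 f01 fm in auto)
      have FtI: "Ft = (\<integral>x. ln (1 + (x - t)\<^sup>2) \<partial>\<mu>)" unfolding Ft_def Fm_def \<mu>_def ..
      have F0I: "F0 = (\<integral>x. ln (1 + (x - 0)\<^sup>2) \<partial>\<mu>)" unfolding F0_def Fm_def \<mu>_def ..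
      have Q1: "Ft \<le> ln 2 + F0 + ln (1 + t\<^sup>2)"
      proof -
        have "Ft \<le> (\<integral>x. (ln 2 + ln (1 + t\<^sup>2)) + 1 * ln (1 + (x - 0)\<^sup>2) + 0 * ln (1 + (x - 0)\<^sup>2) \<partial>\<mu>)"
          unfolding FtI using iYt iY0 lnP2 by (intro Bochner_Integration.integral_mono) (auto simp: add_ac)
        also have "\<dots> = ln 2 + ln (1 + t\<^sup>2) + F0" unfolding F0I by (subst int_lin[OF P\<mu> iY0 iY0]) simp
        finally show ?thesis by simp
      qed
      have Q2: "ln (1 + t\<^sup>2) \<le> ln 2 + F0 + Ft"
      proof -
        have "ln (1 + t\<^sup>2) = (\<integral>x. ln (1 + t\<^sup>2) \<partial>\<mu>)" by (simp add: N.prob_space)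
        also have "\<dots> \<le> (\<integral>x. ln 2 + 1 * ln (1 + (x - 0)\<^sup>2) + 1 * ln (1 + (x - t)\<^sup>2) \<partial>\<mu>)"
          using iYt iY0 lnP1 by (intro Bochner_Integration.integral_mono) auto
        also have "\<dots> = ln 2 + F0 + Ft" unfolding F0I FtI by (subst int_lin[OF P\<mu> iY0 iYt]) simp
        finally show ?thesis .
      qed
      have key: "exp (l * (F0 + \<delta>)) * G \<le> exp (- (l * D / 2))"
      proof (cases "D \<ge> D0")
        case True
        define E1 where "E1 = exp (l * (ln 2 - ln (1 + t\<^sup>2)))"
        have E1pos: "E1 > 0" unfolding E1_def by simp
        have pA: "f x \<le> (E1 - E1 * (l / d0)) + (E1 * (l / d0)) * (1 + x\<^sup>2) powr d0 + 0 * (1 + x\<^sup>2) powr d0" for x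
        proof -
          have "f x \<le> exp (l * (ln 2 - ln (1 + t\<^sup>2)) + l * ln (1 + x\<^sup>2))"
            proof -
            have "l * ln (1 + t\<^sup>2) \<le> l * (ln 2 + ln (1 + x\<^sup>2) + ln (1 + (x - t)\<^sup>2))"
              by (rule mult_left_mono[OF lnP1]) (use l in auto)
            then show ?thesis unfolding fexp by (simp add: algebra_simps)
          qed
          also have "\<dots> = E1 * (1 + x\<^sup>2) powr l"
            unfolding E1_def by (simp add: exp_add powr_def nz mult.commute)
          also have "(1 + x\<^sup>2) powr l \<le> 1 + (l / d0) * ((1 + x\<^sup>2) powr d0 - 1)"
          proof -
            have "((1 + x\<^sup>2) powr d0) powr (l / d0) \<le> 1 + (l / d0) * ((1 + x\<^sup>2) powr d0 - 1)"
              using l \<delta> d0 nz[of x] by (intro young1) auto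
            moreover have "((1 + x\<^sup>2) powr d0) powr (l / d0) = (1 + x\<^sup>2) powr l"
              using d0 by (simp add: powr_powr)
            ultimately show ?thesis by simp
          qed
          then have "E1 * (1 + x\<^sup>2) powr l \<le> E1 * (1 + (l / d0) * ((1 + x\<^sup>2) powr d0 - 1))"
            using E1pos by simp
          finally show ?thesis by (simp add: algebra_simps)
        qed
        have "G \<le> (\<integral>x. (E1 - E1 * (l / d0)) + (E1 * (l / d0)) * (1 + x\<^sup>2) powr d0 + 0 * (1 + x\<^sup>2) powr d0 \<partial>\<mu>)"
          unfolding G_def using iF iZ pA by (intro Bochner_Integration.integral_mono) auto
        also have "\<dots> = (E1 - E1 * (l / d0)) + (E1 * (l / d0)) * EZ"
          unfolding EZ_def by (subst int_lin[OF P\<mu> iZ iZ]) simp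
        also have "\<dots> = E1 * (1 + l * K0)" unfolding K0_def using d0 by (simp add: field_simps)
        also have "\<dots> \<le> E1 * exp (l * K0)" using E1pos exp_ge_add_one_self[of "l * K0"] by simp
        finally have GA: "G \<le> E1 * exp (l * K0)" .
        have "exp (l * (F0 + \<delta>)) * G \<le> exp (l * (F0 + \<delta>)) * (E1 * exp (l * K0))"
          using GA by simp
        also have "\<dots> = exp (l * (F0 + \<delta> + ln 2 - ln (1 + t\<^sup>2) + K0))"
          unfolding E1_def by (simp add: exp_add[symmetric] algebra_simps)
        also have "\<dots> \<le> exp (- (l * D / 2))"
        proof -
          have "F0 + \<delta> + ln 2 - ln (1 + t\<^sup>2) + K0 \<le> - (D / 2)"
            using Q1 True \<delta> abs_ge_self[of K0] F0nn ln2 unfolding D_def D0_def by (simp add: field_simps)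
          then have "l * (F0 + \<delta> + ln 2 - ln (1 + t\<^sup>2) + K0) \<le> l * (- (D / 2))"
            using l by (intro mult_left_mono) auto
          then show ?thesis by simp
        qed
        finally show ?thesis .
      next
        case False
        define Ab' where "Ab' = Ab"
        have pB: "f x \<le> (1 + l\<^sup>2 * Ab\<^sup>2) + (- l) * ln (1 + (x - t)\<^sup>2) + (4 * l\<^sup>2 / d0\<^sup>2) * (1 + x\<^sup>2) powr d0" for x
        proof -
          define Y where "Y = ln (1 + (x - t)\<^sup>2)"
          define L where "L = ln (1 + x\<^sup>2)"
          have Y0: "Y \<ge> 0" unfolding Y_def by simp
          have L0: "L \<ge> 0" unfolding L_def by simp
          have YL: "Y \<le> Ab + L"
            using lnP2[of x t] Q2 False \<delta> unfolding Y_def L_def Ab_def D_def by linarith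
          have Lb: "L \<le> (1 + x\<^sup>2) powr (d0/2) / (d0/2)" unfolding L_def using d0 by (intro ln_le_powr pz) auto
          have "L\<^sup>2 \<le> ((1 + x\<^sup>2) powr (d0/2) / (d0/2))\<^sup>2" using L0 Lb by (intro power_mono) auto
          also have "\<dots> = 4 / d0\<^sup>2 * ((1 + x\<^sup>2) powr (d0/2) * (1 + x\<^sup>2) powr (d0/2))"
            by (simp add: power2_eq_square field_simps)
          also have "(1 + x\<^sup>2) powr (d0/2) * (1 + x\<^sup>2) powr (d0/2) = (1 + x\<^sup>2) powr d0"
            by (simp add: powr_add[symmetric])
          finally have L2: "L\<^sup>2 \<le> 4 / d0\<^sup>2 * (1 + x\<^sup>2) powr d0" .
          have "Y\<^sup>2 \<le> (Ab + L)\<^sup>2" using Y0 YL by (intro power_mono) auto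
          also have "\<dots> \<le> 2 * Ab\<^sup>2 + 2 * L\<^sup>2" using zero_le_power2[of "Ab - L"] by (simp add: power2_eq_square algebra_simps)
          finally have Y2: "Y\<^sup>2 \<le> 2 * Ab\<^sup>2 + 8 / d0\<^sup>2 * (1 + x\<^sup>2) powr d0" using L2 by simp
          have "f x \<le> 1 - l * Y + (l * Y)\<^sup>2 / 2"
            unfolding fexp Y_def[symmetric] using exp_quad[of "l * Y"] l Y0 by simp
          also have "(l * Y)\<^sup>2 / 2 = l\<^sup>2 * Y\<^sup>2 / 2" by (simp add: power_mult_distrib)
          also have "\<dots> \<le> l\<^sup>2 * (2 * Ab\<^sup>2 + 8 / d0\<^sup>2 * (1 + x\<^sup>2) powr d0) / 2"
            using Y2 by (intro divide_right_mono mult_left_mono) auto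
          finally have fx: "f x \<le> 1 - l * Y + l\<^sup>2 * (2 * Ab\<^sup>2 + 8 / d0\<^sup>2 * (1 + x\<^sup>2) powr d0) / 2"
            by simp
          have eq: "l\<^sup>2 * (2 * Ab\<^sup>2 + 8 / d0\<^sup>2 * (1 + x\<^sup>2) powr d0) / 2 = l\<^sup>2 * Ab\<^sup>2 + (4 * l\<^sup>2 / d0\<^sup>2) * (1 + x\<^sup>2) powr d0"
            using d0 by (simp add: field_simps)
          show ?thesis using fx unfolding eq Y_def by simp
        qed
        have "G \<le> (\<integral>x. (1 + l\<^sup>2 * Ab\<^sup>2) + (- l) * ln (1 + (x - t)\<^sup>2) + (4 * l\<^sup>2 / d0\<^sup>2) * (1 + x\<^sup>2) powr d0 \<partial>\<mu>)"
          unfolding G_def using iF iZ iYt pB by (intro Bochner_Integration.integral_mono) auto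
        also have "\<dots> = (1 + l\<^sup>2 * Ab\<^sup>2) + (- l) * Ft + (4 * l\<^sup>2 / d0\<^sup>2) * EZ"
          unfolding EZ_def FtI by (rule int_lin[OF P\<mu> iYt iZ])
        also have "\<dots> = 1 + (- l * Ft + l\<^sup>2 * B2 / 2)"
          unfolding B2_def by (simp add: field_simps)
        also have "\<dots> \<le> exp (- l * Ft + l\<^sup>2 * B2 / 2)" by (rule exp_ge_add_one_self)
        finally have GB: "G \<le> exp (- l * Ft + l\<^sup>2 * B2 / 2)" .
        have "exp (l * (F0 + \<delta>)) * G \<le> exp (l * (F0 + \<delta>)) * exp (- l * Ft + l\<^sup>2 * B2 / 2)"
          using GB by simp
        also have "\<dots> = exp (l * (F0 + \<delta>) - l * Ft + l\<^sup>2 * B2 / 2)" by (simp add: exp_add[symmetric])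
        also have "\<dots> \<le> exp (- (l * D / 2))"
        proof -
          have "l * B2 / 2 \<le> \<delta>"
          proof -
            have "s * B2 * \<delta> \<le> 2 * \<delta>" using sB2 \<delta> by (intro mult_right_mono) auto
            then show ?thesis unfolding l_def by (simp add: algebra_simps)
          qed
          then have "l * (l * B2 / 2) \<le> l * \<delta>" using l by (intro mult_left_mono) auto
          then have "l\<^sup>2 * B2 / 2 \<le> l * \<delta>" by (simp add: power2_eq_square algebra_simps)
          moreover have "l * D \<ge> 0" using l Dpos by simp
          ultimately have "l * (F0 + \<delta>) - l * Ft + l\<^sup>2 * B2 / 2 \<le> - (l * D / 2)"
          proof -
            have e1: "l * D = l * Ft - l * F0 - 2 * (l * \<delta>)" by (simp add: D_def algebra_simps)
            have e2: "l * (F0 + \<delta>) = l * F0 + l * \<delta>" by (simp add: algebra_simps)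
            show ?thesis using e1 e2 \<open>l\<^sup>2 * B2 / 2 \<le> l * \<delta>\<close> \<open>l * D \<ge> 0\<close> by linarith
          qed
          then show ?thesis by simp
        qed
        finally show ?thesis .
      qed
      have "measure M {\<omega> \<in> space M. Ln X n t \<omega> \<le> Fm m 0 + \<delta>} \<le> (exp (l * (F0 + \<delta>)) * G) ^ n" by (rule ch)
      also have "\<dots> \<le> exp (- (l * D / 2)) ^ n"
        using key Gnn by (intro power_mono) auto
      also have "\<dots> = exp (- (l * D / 2) * real n)"
        by (simp add: exp_of_nat_mult[symmetric] mult.commute)
      finally show ?thesis .
    qed
    then show "measure M {\<omega> \<in> space M. Ln X n t \<omega> \<le> Fm m 0 + \<delta>}
               \<le> exp (- (\<delta> / (2 / s)) * (Fm m t - Fm m 0 - 2 * \<delta>) * real n)"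
      by (simp only: eqc)
  qed
qed

end
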